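(* Let $f:\mathbb{R}^d\times\mathcal{X}\to\mathbb{R}$ be differentiable in $\theta$, where $\mathcal{X}$ is a subset of a Euclidean space with $\sup_{x\in\mathcal{X}}\Vert x\Vert\le D<\infty$ and $\sup_{x\in\mathcal{X}}\Vert\nabla f(0,x)\Vert\le E<\infty$. Assume (A1): there are $K_1,K_2>0$ with $\Vert\nabla f(\theta,x)-\nabla f(\hat\theta,\hat x)\Vert\le K_1\Vert\theta-\hat\theta\Vert+K_2\Vert x-\hat x\Vert(\Vert\theta\Vert+\Vert\hat\theta\Vert+1)$ for all $\theta,\hat\theta\in\mathbb{R}^d$, $x,\hat x\in\mathcal{X}$; (A2): there is $\mu>0$ with $\langle\nabla f(\theta_1,x)-\nabla f(\theta_2,x),\theta_1-\theta_2\rangle\ge\mu\Vert\theta_1-\theta_2\Vert^2$ for all $\theta_1,\theta_2\in\mathbb{R}^d$, $x\in\mathcal{X}$. Let $X_n=(x_1,\dots,x_n)$, $\hat X_n=(\hat x_1,\dots,\hat x_n)\in\mathcal{X}^n$ differ in at most one index, $b\in\{1,\dots,n\}$, $(\Omega_k)_{k\ge1}$ i.i.d. uniformly random $b$-subsets of $\{1,\dots,n\}$, and $$\theta_k=\theta_{k-1}-\tfrac\eta b\textstyle\sum_{i\in\Omega_k}\nabla f(\theta_{k-1},x_i),\qquad\hat\theta_k=\hat\theta_{k-1}-\tfrac\eta b\sum_{i\in\Omega_k}\nabla f(\hat\theta_{k-1},\hat x_i),$$ with $\theta_0=\hat\theta_0=\theta\in\mathbb{R}^d$. Assume $\eta<\min\left\{\frac1\mu,\frac{\mu}{K_1^2+64D^2K_2^2}\right\}$.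 Let $\nu_k,\hat\nu_k$ be the laws of $\theta_k,\hat\theta_k$. Then for all $k$, $$\mathcal{W}_1(\nu_k,\hat\nu_k)\le\frac{8DK_2\left(1-(1-\frac{\eta\mu}2)^k\right)}{n\mu}\left(\frac{2E}\mu+1\right)\max\left\{1+2\Vert\theta\Vert^2+\frac{2E^2}{\mu^2},\ 2-\frac\eta\mu K_1^2-\frac{56\eta}{\mu}D^2K_2^2+\frac{64\eta}{\mu^3}D^2K_2^2E^2\right\}.$$
   Context: $\mathcal{W}_1$ is the 1-Wasserstein distance between probability measures on $\mathbb{R}^d$. *)

theory Defs
  imports "HOL-Probability.Probability"
begin

definition couplings :: "'a::euclidean_space measure \<Rightarrow> 'a measure \<Rightarrow> ('a \<times> 'a) measure set" where
  "couplings M N = {\<pi>. prob_space \<pi> \<and> sets \<pi> = sets (borel :: ('a \<times> 'a) measure) \<and>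
      (\<forall>A \<in> sets (borel :: 'a measure).
         emeasure \<pi> (fst -` A) = emeasure M A \<and> emeasure \<pi> (snd -` A) = emeasure N A)}"

definition W1 :: "'a::euclidean_space measure \<Rightarrow> 'a measure \<Rightarrow> ennreal" where
  "W1 M N = (INF \<pi> \<in> couplings M N. \<integral>\<^sup>+ z. ennreal (dist (fst z) (snd z)) \<partial>\<pi>)"

definition bsubsets :: "nat \<Rightarrow> nat \<Rightarrow> nat set set" where
  "bsubsets n b = {\<Omega>. \<Omega> \<subseteq> {1..n} \<and> card \<Omega> = b}"

definition sgd_step :: "('a::euclidean_space \<Rightarrow> 'x \<Rightarrow> 'a) \<Rightarrow> (nat \<Rightarrow> 'x) \<Rightarrow> real \<Rightarrow> nat
    \<Rightarrow> 'a \<Rightarrow> nat set \<Rightarrow> 'a" where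
  "sgd_step g xs \<eta> b t \<Omega> = t - (\<eta> / real b) *\<^sub>R (\<Sum>i\<in>\<Omega>. g t (xs i))"

text \<open>Law of theta_k: the batches (\<Omega>_1,...,\<Omega>_k) are i.i.d. uniform on b-subsets of {1..n},
i.e. uniform on the set of length-k lists of b-subsets; theta_k is the k-fold iterate.\<close>
definition sgd_law :: "('a::euclidean_space \<Rightarrow> 'x \<Rightarrow> 'a) \<Rightarrow> (nat \<Rightarrow> 'x) \<Rightarrow> real \<Rightarrow> nat \<Rightarrow> nat
    \<Rightarrow> 'a \<Rightarrow> nat \<Rightarrow> 'a measure" where
  "sgd_law g xs \<eta> n b \<theta> k = measure_pmf (map_pmf (\<lambda>ws. foldl (sgd_step g xs \<eta> b) \<theta> ws)
      (pmf_of_set {ws. length ws = k \<and> set ws \<subseteq> bsubsets n b}))"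

end

theory Submission
  imports Defs
begin

lemma W1_coupling:
  fixes g g' :: "'b \<Rightarrow> 'a::euclidean_space" and P :: "'b pmf"
  shows "W1 (measure_pmf (map_pmf g P)) (measure_pmf (map_pmf g' P))
         \<le> \<integral>\<^sup>+ ws. ennreal (dist (g ws) (g' ws)) \<partial>measure_pmf P"
proof -
  define h where "h = (\<lambda>ws. (g ws, g' ws))"
  define \<pi> where "\<pi> = distr (measure_pmf P) (borel :: ('a \<times> 'a) measure) h"
  have hm: "h \<in> measure_pmf P \<rightarrow>\<^sub>M borel" by simp
  have fstA: "fst -` A \<in> sets (borel :: ('a \<times> 'a) measure)" if "A \<in> sets borel" for A :: "'a set"
  proof -
    have "fst \<in> (borel :: ('a \<times> 'a) measure) \<rightarrow>\<^sub>M borel"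
      by (metis borel_prod measurable_fst)
    from measurable_sets[OF this that] show ?thesis by simp
  qed
  have sndA: "snd -` A \<in> sets (borel :: ('a \<times> 'a) measure)" if "A \<in> sets borel" for A :: "'a set"
  proof -
    have "snd \<in> (borel :: ('a \<times> 'a) measure) \<rightarrow>\<^sub>M borel"
      by (metis borel_prod measurable_snd)
    from measurable_sets[OF this that] show ?thesis by simp
  qed
  have cp: "\<pi> \<in> couplings (measure_pmf (map_pmf g P)) (measure_pmf (map_pmf g' P))"
    unfolding couplings_def
  proof (intro CollectI conjI ballI)
    show "prob_space \<pi>" unfolding \<pi>_def
      by (rule prob_space.prob_space_distr[OF _ hm]) (rule prob_space_measure_pmf)
    show "sets \<pi> = sets borel" unfolding \<pi>_def by simp
  next
    fix A :: "'a set" assume A: "A \<in> sets borel"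
    show "emeasure \<pi> (fst -` A) = emeasure (measure_pmf (map_pmf g P)) A"
      unfolding \<pi>_def map_pmf_rep_eq
      by (subst emeasure_distr[OF hm fstA[OF A]], subst emeasure_distr) (auto simp: h_def vimage_def)
    show "emeasure \<pi> (snd -` A) = emeasure (measure_pmf (map_pmf g' P)) A"
      unfolding \<pi>_def map_pmf_rep_eq
      by (subst emeasure_distr[OF hm sndA[OF A]], subst emeasure_distr) (auto simp: h_def vimage_def)
  qed
  have "W1 (measure_pmf (map_pmf g P)) (measure_pmf (map_pmf g' P))
        \<le> \<integral>\<^sup>+ z. ennreal (dist (fst z) (snd z)) \<partial>\<pi>"
    unfolding W1_def by (rule INF_lower[OF cp])
  also have "\<dots> = \<integral>\<^sup>+ ws. ennreal (dist (g ws) (g' ws)) \<partial>measure_pmf P"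
    unfolding \<pi>_def
    by (subst nn_integral_distr[OF hm]) (auto simp: h_def intro!: borel_measurable_continuous_onI continuous_intros)
  finally show ?thesis .
qed


locale sgdctx =
  fixes gradf :: "'a::euclidean_space \<Rightarrow> 'x::euclidean_space \<Rightarrow> 'a"
    and X :: "'x set" and D E K1 K2 \<mu> \<eta> :: real
  assumes D: "\<forall>x\<in>X. norm x \<le> D"
    and E: "\<forall>x\<in>X. norm (gradf 0 x) \<le> E"
    and K2: "K2 > 0"
    and A1: "\<And>t t' x x'. x \<in> X \<Longrightarrow> x' \<in> X \<Longrightarrow>
              norm (gradf t x - gradf t' x') \<le> K1 * norm (t - t') + K2 * norm (x - x') * (norm t + norm t' + 1)"
    and mu: "\<mu> > 0"
    and A2: "\<And>t1 t2 x. x \<in> X \<Longrightarrow> (gradf t1 x - gradf t2 x) \<bullet> (t1 - t2) \<ge> \<mu> * (norm (t1 - t2))\<^sup>2"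
    and eta_pos: "\<eta> > 0"
    and etaK: "\<eta> * K1\<^sup>2 \<le> \<mu>"
    and etamu: "\<eta> * \<mu> \<le> 1"
    and E0: "E \<ge> 0"
begin

lemma contr:
  assumes W: "card W = b" "b > 0" and y: "\<forall>i\<in>W. y i \<in> X"
  shows "norm (sgd_step gradf y \<eta> b u W - sgd_step gradf y \<eta> b v W) \<le> (1 - \<eta>*\<mu>/2) * norm (u - v)"
proof -
  have fin: "finite W" using W card_gt_0_iff by blast
  define G where "G = (1/real b) *\<^sub>R (\<Sum>i\<in>W. gradf u (y i) - gradf v (y i))"
  define \<delta> where "\<delta> = u - v"
  have eq: "sgd_step gradf y \<eta> b u W - sgd_step gradf y \<eta> b v W = \<delta> - \<eta> *\<^sub>R G"
    unfolding sgd_step_def G_def \<delta>_def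
    by (simp add: sum_subtractf scaleR_diff_right algebra_simps)
  have "(\<Sum>i\<in>W. (gradf u (y i) - gradf v (y i)) \<bullet> \<delta>) \<ge> (\<Sum>i\<in>W. \<mu> * (norm \<delta>)\<^sup>2)"
    by (rule sum_mono) (use A2 y in \<open>auto simp: \<delta>_def\<close>)
  hence "(\<Sum>i\<in>W. (gradf u (y i) - gradf v (y i)) \<bullet> \<delta>) \<ge> real b * (\<mu> * (norm \<delta>)\<^sup>2)"
    using W by simp
  hence ip: "G \<bullet> \<delta> \<ge> \<mu> * (norm \<delta>)\<^sup>2"
    using W unfolding G_def by (simp add: inner_sum_left field_simps)
  have "norm (\<Sum>i\<in>W. gradf u (y i) - gradf v (y i)) \<le> (\<Sum>i\<in>W. norm (gradf u (y i) - gradf v (y i)))"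
    by (rule norm_sum)
  also have "\<dots> \<le> (\<Sum>i\<in>W. K1 * norm \<delta>)"
  proof (rule sum_mono)
    fix i assume "i \<in> W"
    hence "y i \<in> X" using y by auto
    from A1[OF this this, of u v] show "norm (gradf u (y i) - gradf v (y i)) \<le> K1 * norm \<delta>"
      by (simp add: \<delta>_def)
  qed
  also have "\<dots> = real b * (K1 * norm \<delta>)" using W by simp
  finally have nG: "norm G \<le> K1 * norm \<delta>"
    using W unfolding G_def by (simp add: field_simps)
  have nG2: "(norm G)\<^sup>2 \<le> K1\<^sup>2 * (norm \<delta>)\<^sup>2"
    by (metis nG norm_ge_zero power_mono power_mult_distrib)
  have "(norm (\<delta> - \<eta> *\<^sub>R G))\<^sup>2 = (norm \<delta>)\<^sup>2 - 2*\<eta>*(G \<bullet> \<delta>) + \<eta>\<^sup>2 * (norm G)\<^sup>2"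
    unfolding power2_norm_eq_inner by (simp add: inner_diff_left inner_diff_right inner_commute power2_eq_square algebra_simps)
  also have "\<dots> \<le> (norm \<delta>)\<^sup>2 - 2*\<eta>*(\<mu> * (norm \<delta>)\<^sup>2) + \<eta>\<^sup>2 * (K1\<^sup>2 * (norm \<delta>)\<^sup>2)"
    using ip nG2 eta_pos by (intro add_mono diff_mono mult_left_mono) auto
  also have "\<dots> \<le> ((1 - \<eta>*\<mu>/2) * norm \<delta>)\<^sup>2"
  proof -
    have a: "\<eta>\<^sup>2 * K1\<^sup>2 \<le> \<eta> * \<mu>"
      using etaK eta_pos by (simp add: power2_eq_square mult.assoc mult_left_mono)
    have "\<eta>\<^sup>2 * (K1\<^sup>2 * (norm \<delta>)\<^sup>2) \<le> \<eta> * \<mu> * (norm \<delta>)\<^sup>2"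
      using mult_right_mono[OF a, of "(norm \<delta>)\<^sup>2"] by (simp add: mult.assoc)
    moreover have "0 \<le> (\<eta>*\<mu>/2)\<^sup>2 * (norm \<delta>)\<^sup>2" by simp
    ultimately show ?thesis by (simp add: power2_eq_square algebra_simps)
  qed
  finally have "(norm (\<delta> - \<eta> *\<^sub>R G))\<^sup>2 \<le> ((1 - \<eta>*\<mu>/2) * norm \<delta>)\<^sup>2" .
  moreover have "0 \<le> (1 - \<eta>*\<mu>/2) * norm \<delta>" using etamu by simp
  ultimately have "norm (\<delta> - \<eta> *\<^sub>R G) \<le> (1 - \<eta>*\<mu>/2) * norm \<delta>"
    by (rule power2_le_imp_le)
  thus ?thesis using eq \<delta>_def by simp
qed

lemma step0:
  assumes W: "card W = b" "b > 0" and y: "\<forall>i\<in>W. y i \<in> X"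
  shows "norm (sgd_step gradf y \<eta> b 0 W) \<le> \<eta> * E"
proof -
  have "norm (\<Sum>i\<in>W. gradf 0 (y i)) \<le> (\<Sum>i\<in>W. norm (gradf 0 (y i)))" by (rule norm_sum)
  also have "\<dots> \<le> (\<Sum>i\<in>W. E)" by (rule sum_mono) (use E y in auto)
  also have "\<dots> = real b * E" using W by simp
  finally have "norm (\<Sum>i\<in>W. gradf 0 (y i)) \<le> real b * E" .
  hence "\<eta> / real b * norm (\<Sum>i\<in>W. gradf 0 (y i)) \<le> \<eta> / real b * (real b * E)"
    using eta_pos W by (intro mult_left_mono) auto
  thus ?thesis using W eta_pos by (simp add: sgd_step_def)
qed

lemma bnd:
  assumes W: "card W = b" "b > 0" and y: "\<forall>i\<in>W. y i \<in> X"
  shows "norm (sgd_step gradf y \<eta> b u W) \<le> (1 - \<eta>*\<mu>/2) * norm u + \<eta> * E"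
proof -
  have "norm (sgd_step gradf y \<eta> b u W) \<le> norm (sgd_step gradf y \<eta> b 0 W) + norm (sgd_step gradf y \<eta> b u W - sgd_step gradf y \<eta> b 0 W)"
     by (rule norm_triangle_sub)
  thus ?thesis using contr[OF assms, of u 0] step0[OF assms] by simp
qed

lemma fold_bnd:
  assumes b: "b > 0" and y: "\<forall>i\<in>{1..n}. y i \<in> X" and ws: "set ws \<subseteq> bsubsets n b"
  shows "norm (foldl (sgd_step gradf y \<eta> b) \<theta> ws) \<le> norm \<theta> + 2*E/\<mu>"
  using ws
proof (induction ws rule: rev_induct)
  case Nil thus ?case using mu E0 by simp
next
  case (snoc w ws)
  let ?u = "foldl (sgd_step gradf y \<eta> b) \<theta> ws"
  have w: "card w = b" "\<forall>i\<in>w. y i \<in> X" using snoc.prems y by (auto simp: bsubsets_def)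
  have IH: "norm ?u \<le> norm \<theta> + 2*E/\<mu>" using snoc by auto
  have "norm (sgd_step gradf y \<eta> b ?u w) \<le> (1 - \<eta>*\<mu>/2) * norm ?u + \<eta> * E"
    by (rule bnd[OF w(1) b w(2)])
  also have "\<dots> \<le> (1 - \<eta>*\<mu>/2) * (norm \<theta> + 2*E/\<mu>) + \<eta> * E"
    using IH etamu by (intro add_right_mono mult_left_mono) auto
  also have "\<dots> \<le> norm \<theta> + 2*E/\<mu>"
  proof -
    have "(\<eta>*\<mu>/2) * (2*E/\<mu>) = \<eta> * E" using mu by (simp add: field_simps)
    moreover have "0 \<le> (\<eta>*\<mu>/2) * norm \<theta>" using eta_pos mu by simp
    ultimately show ?thesis by (simp add: algebra_simps)
  qed
  finally show ?case by simp
qed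

lemma diff_step:
  assumes b: "b > 0" and W: "W \<in> bsubsets n b"
    and xs: "\<forall>i\<in>{1..n}. xs i \<in> X" and xs': "\<forall>i\<in>{1..n}. xs' i \<in> X"
    and j: "\<forall>i\<in>{1..n}. i \<noteq> j \<longrightarrow> xs i = xs' i"
  shows "norm (sgd_step gradf xs \<eta> b u W - sgd_step gradf xs' \<eta> b v W)
     \<le> (1 - \<eta>*\<mu>/2) * norm (u - v) + \<eta> / real b * (if j \<in> W then 2*D*K2*(2*norm v + 1) else 0)"
proof -
  have Wc: "card W = b" "W \<subseteq> {1..n}" using W by (auto simp: bsubsets_def)
  have fin: "finite W" using Wc b card_gt_0_iff by blast
  have y: "\<forall>i\<in>W. xs i \<in> X" using Wc xs by auto
  have c1: "norm (sgd_step gradf xs \<eta> b u W - sgd_step gradf xs \<eta> b v W) \<le> (1 - \<eta>*\<mu>/2) * norm (u - v)"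
    by (rule contr[OF Wc(1) b y])
  have e2: "sgd_step gradf xs \<eta> b v W - sgd_step gradf xs' \<eta> b v W
      = - ((\<eta> / real b) *\<^sub>R (\<Sum>i\<in>W. gradf v (xs i) - gradf v (xs' i)))"
    unfolding sgd_step_def by (simp add: sum_subtractf scaleR_diff_right)
  have "norm (\<Sum>i\<in>W. gradf v (xs i) - gradf v (xs' i)) \<le> (\<Sum>i\<in>W. norm (gradf v (xs i) - gradf v (xs' i)))"
    by (rule norm_sum)
  also have "\<dots> \<le> (\<Sum>i\<in>W. if i = j then 2*D*K2*(2*norm v + 1) else 0)"
  proof (rule sum_mono)
    fix i assume i: "i \<in> W"
    hence iX: "i \<in> {1..n}" using Wc by auto
    show "norm (gradf v (xs i) - gradf v (xs' i)) \<le> (if i = j then 2*D*K2*(2*norm v + 1) else 0)"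
    proof (cases "i = j")
      case False thus ?thesis using j iX by simp
    next
      case True
      have a: "norm (xs i - xs' i) \<le> 2*D"
      proof -
        have "norm (xs i) \<le> D" "norm (xs' i) \<le> D" using D xs xs' iX by auto
        thus ?thesis using norm_triangle_ineq4[of "xs i" "xs' i"] by linarith
      qed
      have "norm (gradf v (xs i) - gradf v (xs' i)) \<le> K2 * norm (xs i - xs' i) * (2*norm v + 1)"
        using A1[of "xs i" "xs' i" v v] xs xs' iX by simp
      also have "\<dots> \<le> K2 * (2*D) * (2*norm v + 1)"
        using a K2 by (intro mult_right_mono mult_left_mono) auto
      finally show ?thesis using True by (simp add: algebra_simps)
    qed
  qed
  also have "\<dots> = (if j \<in> W then 2*D*K2*(2*norm v + 1) else 0)"
    using fin by (simp add: sum.delta')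
  finally have c2a: "norm (\<Sum>i\<in>W. gradf v (xs i) - gradf v (xs' i)) \<le> (if j \<in> W then 2*D*K2*(2*norm v + 1) else 0)" .
  have "\<eta> / real b * norm (\<Sum>i\<in>W. gradf v (xs i) - gradf v (xs' i)) \<le> \<eta> / real b * (if j \<in> W then 2*D*K2*(2*norm v + 1) else 0)"
    using c2a eta_pos b by (intro mult_left_mono) auto
  hence c2: "norm (sgd_step gradf xs \<eta> b v W - sgd_step gradf xs' \<eta> b v W)
      \<le> \<eta> / real b * (if j \<in> W then 2*D*K2*(2*norm v + 1) else 0)"
    unfolding e2 using eta_pos b by simp
  have "norm (sgd_step gradf xs \<eta> b u W - sgd_step gradf xs' \<eta> b v W)
     \<le> norm (sgd_step gradf xs \<eta> b u W - sgd_step gradf xs \<eta> b v W)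
      + norm (sgd_step gradf xs \<eta> b v W - sgd_step gradf xs' \<eta> b v W)"
    by (rule norm_diff_triangle_le) auto
  thus ?thesis using c1 c2 by simp
qed

end


lemma card_bsubsets: "card (bsubsets n b) = n choose b"
  unfolding bsubsets_def using n_subsets[of "{1..n}" b] by simp

lemma finite_bsubsets: "finite (bsubsets n b)"
  unfolding bsubsets_def by (rule finite_subset[of _ "Pow {1..n}"]) auto

lemma count_bsubsets:
  assumes b: "0 < b"
  shows "real (card {W \<in> bsubsets n b. j \<in> W}) * real n \<le> real (card (bsubsets n b)) * real b"
proof (cases "j \<in> {1..n}")
  case False
  hence "{W \<in> bsubsets n b. j \<in> W} = {}" by (auto simp: bsubsets_def)
  hence "card {W \<in> bsubsets n b. j \<in> W} = 0" by (simp only: card.empty)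
  thus ?thesis by simp
next
  case True
  have eq: "{W \<in> bsubsets n b. j \<in> W} = insert j ` {B. B \<subseteq> {1..n} - {j} \<and> card B = b - 1}"
  proof (intro equalityI subsetI)
    fix W assume W: "W \<in> {W \<in> bsubsets n b. j \<in> W}"
    hence fin: "finite W" by (auto simp: bsubsets_def intro: finite_subset)
    have "W = insert j (W - {j})" using W by auto
    moreover have "W - {j} \<in> {B. B \<subseteq> {1..n} - {j} \<and> card B = b - 1}"
      using W fin by (auto simp: bsubsets_def)
    ultimately show "W \<in> insert j ` {B. B \<subseteq> {1..n} - {j} \<and> card B = b - 1}" by blast
  next
    fix W assume "W \<in> insert j ` {B. B \<subseteq> {1..n} - {j} \<and> card B = b - 1}"
    then obtain B where B: "B \<subseteq> {1..n} - {j}" "card B = b - 1" "W = insert j B" by auto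
    have fin: "finite B" using B(1) by (auto intro: finite_subset)
    have "j \<notin> B" using B by auto
    hence "card W = b" using B fin b by simp
    thus "W \<in> {W \<in> bsubsets n b. j \<in> W}" using B True by (auto simp: bsubsets_def)
  qed
  have inj: "inj_on (insert j) {B. B \<subseteq> {1..n} - {j} \<and> card B = b - 1}"
  proof (rule inj_onI)
    fix x y assume x: "x \<in> {B. B \<subseteq> {1..n} - {j} \<and> card B = b - 1}"
      and y: "y \<in> {B. B \<subseteq> {1..n} - {j} \<and> card B = b - 1}" and e: "insert j x = insert j y"
    have "j \<notin> x" "j \<notin> y" using x y by auto
    hence "x = insert j x - {j}" "y = insert j y - {j}" by auto
    thus "x = y" using e by simp
  qed
  have "card {W \<in> bsubsets n b. j \<in> W} = card {B. B \<subseteq> {1..n} - {j} \<and> card B = b - 1}"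
    unfolding eq by (rule card_image[OF inj])
  also have "\<dots> = (n - 1) choose (b - 1)"
    using n_subsets[of "{1..n} - {j}" "b - 1"] True by simp
  finally have c: "card {W \<in> bsubsets n b. j \<in> W} = (n - 1) choose (b - 1)" .
  have "b * (n choose b) = n * ((n - 1) choose (b - 1))" by (rule times_binomial_minus1_eq[OF b])
  hence h: "real b * real (n choose b) = real n * real ((n - 1) choose (b - 1))"
    by (simp only: of_nat_mult[symmetric])
  have "real (card {W \<in> bsubsets n b. j \<in> W}) * real n = real (card (bsubsets n b)) * real b"
    unfolding c card_bsubsets using h by (simp add: mult.commute)
  thus ?thesis by simp
qed

lemma sum_lists_snoc:
  assumes S: "finite S"
  shows "(\<Sum>ws\<in>{ws. length ws = Suc k \<and> set ws \<subseteq> S}. h ws)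
       = (\<Sum>ws\<in>{ws. length ws = k \<and> set ws \<subseteq> S}. \<Sum>w\<in>S. h (ws @ [w]))"
proof -
  have finL: "finite {ws. length ws = k \<and> set ws \<subseteq> S}"
    using finite_lists_length_eq[OF S, of k] by (simp add: conj_commute)
  have eq: "{ws. length ws = Suc k \<and> set ws \<subseteq> S} = (\<lambda>(ws, w). ws @ [w]) ` ({ws. length ws = k \<and> set ws \<subseteq> S} \<times> S)"
  proof (intro equalityI subsetI)
    fix xs assume xs: "xs \<in> {ws. length ws = Suc k \<and> set ws \<subseteq> S}"
    then obtain ys y where "xs = ys @ [y]" by (cases xs rule: rev_cases) auto
    thus "xs \<in> (\<lambda>(ws, w). ws @ [w]) ` ({ws. length ws = k \<and> set ws \<subseteq> S} \<times> S)"
      using xs by (auto intro!: image_eqI[of _ _ "(ys, y)"])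
  qed auto
  have inj: "inj_on (\<lambda>(ws, w). ws @ [w]) ({ws. length ws = k \<and> set ws \<subseteq> S} \<times> S)"
    by (rule inj_onI) auto
  show ?thesis
    unfolding eq sum.reindex[OF inj] by (simp add: sum.cartesian_product split_beta comp_def)
qed

context sgdctx
begin

lemma avg_bound:
  assumes b: "0 < b" "b \<le> n"
    and xs: "\<forall>i\<in>{1..n}. xs i \<in> X" and xs': "\<forall>i\<in>{1..n}. xs' i \<in> X"
    and j: "\<forall>i\<in>{1..n}. i \<noteq> j \<longrightarrow> xs i = xs' i"
    and D0: "0 \<le> D"
  shows "(\<Sum>ws\<in>{ws. length ws = k \<and> set ws \<subseteq> bsubsets n b}.
           norm (foldl (sgd_step gradf xs \<eta> b) \<theta> ws - foldl (sgd_step gradf xs' \<eta> b) \<theta> ws))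
       \<le> real (card (bsubsets n b)) ^ k *
          (2 * (2*D*K2*(2*(norm \<theta> + 2*E/\<mu>) + 1)) / (real n * \<mu>) * (1 - (1 - \<eta>*\<mu>/2)^k))"
proof (induction k)
  case 0 thus ?case by simp
next
  case (Suc k)
  define S where "S = bsubsets n b"
  define L where "L = {ws. length ws = k \<and> set ws \<subseteq> S}"
  define F where "F = foldl (sgd_step gradf xs \<eta> b) \<theta>"
  define F' where "F' = foldl (sgd_step gradf xs' \<eta> b) \<theta>"
  define N where "N = real (card S)"
  define M where "M = norm \<theta> + 2*E/\<mu>"
  define C where "C = 2*D*K2*(2*M + 1)"
  define \<rho> where "\<rho> = 1 - \<eta>*\<mu>/2"
  define B where "B = (\<lambda>k. 2 * C / (real n * \<mu>) * (1 - \<rho>^k))"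
  have finS: "finite S" unfolding S_def by (rule finite_bsubsets)
  have finL: "finite L" unfolding L_def
    using finite_lists_length_eq[OF finS, of k] by (simp add: conj_commute)
  have cardL: "card L = card S ^ k" unfolding L_def
    using card_lists_length_eq[OF finS, of k] by (simp add: conj_commute)
  have n0: "n > 0" using b by simp
  have C0: "C \<ge> 0" unfolding C_def M_def using D0 K2 E0 mu by simp
  have IH: "(\<Sum>ws\<in>L. norm (F ws - F' ws)) \<le> N ^ k * B k"
    using Suc.IH unfolding L_def S_def F_def F'_def N_def B_def C_def M_def \<rho>_def by simp
  have cnt: "real (card {w \<in> S. j \<in> w}) * real n \<le> N * real b"
    unfolding S_def N_def by (rule count_bsubsets) (use b in auto)
  have step: "(\<Sum>w\<in>S. norm (F (ws @ [w]) - F' (ws @ [w])))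
      \<le> N * \<rho> * norm (F ws - F' ws) + \<eta> * C * N / real n" if ws: "ws \<in> L" for ws
  proof -
    have MF: "norm (F' ws) \<le> M" unfolding F'_def M_def
      by (rule fold_bnd[OF b(1) xs']) (use ws in \<open>auto simp: L_def S_def\<close>)
    have "(\<Sum>w\<in>S. norm (F (ws @ [w]) - F' (ws @ [w])))
        \<le> (\<Sum>w\<in>S. \<rho> * norm (F ws - F' ws) + \<eta> / real b * (if j \<in> w then C else 0))"
    proof (rule sum_mono)
      fix w assume w: "w \<in> S"
      have "norm (F (ws @ [w]) - F' (ws @ [w]))
          \<le> \<rho> * norm (F ws - F' ws) + \<eta> / real b * (if j \<in> w then 2*D*K2*(2*norm (F' ws) + 1) else 0)"
        unfolding F_def F'_def \<rho>_def foldl_append foldl.simps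
        by (rule diff_step[OF b(1) _ xs xs' j]) (use w S_def in simp)
      also have "\<dots> \<le> \<rho> * norm (F ws - F' ws) + \<eta> / real b * (if j \<in> w then C else 0)"
      proof -
        have "2*D*K2*(2*norm (F' ws) + 1) \<le> C"
          unfolding C_def using MF D0 K2 by (intro mult_left_mono) auto
        hence "(if j \<in> w then 2*D*K2*(2*norm (F' ws) + 1) else 0) \<le> (if j \<in> w then C else 0)"
          using C0 by auto
        hence "\<eta> / real b * (if j \<in> w then 2*D*K2*(2*norm (F' ws) + 1) else 0) \<le> \<eta> / real b * (if j \<in> w then C else 0)"
          using eta_pos by (intro mult_left_mono) auto
        thus ?thesis by linarith
      qed
      finally show "norm (F (ws @ [w]) - F' (ws @ [w]))
          \<le> \<rho> * norm (F ws - F' ws) + \<eta> / real b * (if j \<in> w then C else 0)" .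
    qed
    also have "\<dots> = N * \<rho> * norm (F ws - F' ws) + \<eta> / real b * (C * real (card {w \<in> S. j \<in> w}))"
    proof -
      have s1: "(\<Sum>w\<in>S. if j \<in> w then C else 0) = C * real (card {w \<in> S. j \<in> w})"
        using sum.inter_filter[OF finS, of "\<lambda>_. C" "\<lambda>w. j \<in> w"] by (simp add: mult.commute)
      have "(\<Sum>w\<in>S. \<rho> * norm (F ws - F' ws) + \<eta> / real b * (if j \<in> w then C else 0))
          = (\<Sum>w\<in>S. \<rho> * norm (F ws - F' ws)) + \<eta> / real b * (\<Sum>w\<in>S. if j \<in> w then C else 0)"
        by (simp only: sum.distrib sum_distrib_left)
      thus ?thesis unfolding s1 by (simp add: N_def)
    qed
    also have "\<dots> \<le> N * \<rho> * norm (F ws - F' ws) + \<eta> * C * N / real n"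
    proof -
      have cb: "\<eta> / real b * (C * real (card {w \<in> S. j \<in> w})) \<le> \<eta> * C * N / real n"
      proof -
        have "\<eta> / real b * (C * real (card {w \<in> S. j \<in> w}))
            = (\<eta> * C / (real b * real n)) * (real (card {w \<in> S. j \<in> w}) * real n)"
          using b n0 by (simp add: field_simps)
        also have "\<dots> \<le> (\<eta> * C / (real b * real n)) * (N * real b)"
          by (rule mult_left_mono[OF cnt]) (use eta_pos C0 in simp)
        also have "\<dots> = \<eta> * C * N / real n" using b n0 by (simp add: field_simps)
        finally show ?thesis .
      qed
      thus ?thesis by simp
    qed
    finally show ?thesis by simp
  qed
  have "(\<Sum>ws\<in>{ws. length ws = Suc k \<and> set ws \<subseteq> S}. norm (F ws - F' ws))
      = (\<Sum>ws\<in>L. \<Sum>w\<in>S. norm (F (ws @ [w]) - F' (ws @ [w])))"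
    unfolding L_def by (rule sum_lists_snoc[OF finS])
  also have "\<dots> \<le> (\<Sum>ws\<in>L. N * \<rho> * norm (F ws - F' ws) + \<eta> * C * N / real n)"
    by (rule sum_mono) (rule step)
  also have "\<dots> = N * \<rho> * (\<Sum>ws\<in>L. norm (F ws - F' ws)) + N ^ k * (\<eta> * C * N / real n)"
    by (simp add: sum.distrib sum_distrib_left cardL N_def)
  also have "\<dots> \<le> N * \<rho> * (N ^ k * B k) + N ^ k * (\<eta> * C * N / real n)"
    using IH etamu unfolding \<rho>_def N_def by (intro add_right_mono mult_left_mono) auto
  also have "\<dots> = N ^ Suc k * B (Suc k)"
  proof -
    have "\<rho> * B k + \<eta> * C / real n = B (Suc k)"
      unfolding B_def \<rho>_def using mu n0 by (simp add: field_simps)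
    hence "N ^ Suc k * B (Suc k) = N ^ Suc k * (\<rho> * B k + \<eta> * C / real n)" by simp
    thus ?thesis by (simp add: algebra_simps)
  qed
  finally show ?case
    unfolding S_def F_def F'_def N_def B_def C_def M_def \<rho>_def by simp
qed

end


lemma final_arith:
  fixes D K2 \<mu> E r t Mx :: real and n :: nat
  assumes "D \<ge> 0" "K2 > 0" "\<mu> > 0" "n > 0" "E \<ge> 0" "r \<ge> 0" "t \<ge> 0" "Mx \<ge> 1 + 2 * t\<^sup>2"
  shows "2 * (2*D*K2*(2*(t + 2*E/\<mu>) + 1)) / (real n * \<mu>) * r
     \<le> 8 * D * K2 * r / (real n * \<mu>) * (2 * E / \<mu> + 1) * Mx"
proof -
  define q where "q = D*K2*r/(real n*\<mu>)"
  define e where "e = E/\<mu>"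
  have q0: "q \<ge> 0" unfolding q_def using assms by simp
  have e0: "e \<ge> 0" unfolding e_def using assms by simp
  have L: "2 * (2*D*K2*(2*(t + 2*E/\<mu>) + 1)) / (real n * \<mu>) * r = q * (4 * (2*t + 4*e + 1))"
    unfolding q_def e_def by (simp add: field_simps)
  have R: "8 * D * K2 * r / (real n * \<mu>) * (2 * E / \<mu> + 1) * Mx = q * (8 * (2*e+1) * Mx)"
    unfolding q_def e_def by (simp add: field_simps)
  have h1: "(2*e+1) * Mx \<ge> (2*e+1) * (1 + 2*t\<^sup>2)" using assms(8) e0 by (intro mult_left_mono) auto
  have h2: "(2*e+1) * (1 + 2*t\<^sup>2) \<ge> 2*e + 1 + 2*t\<^sup>2" using e0 by (simp add: algebra_simps)
  obtain X where X: "X = (2*e+1) * Mx" by blast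
  have "X \<ge> 2*e + 1 + 2*t\<^sup>2" using h1 h2 X by linarith
  moreover have "2*t\<^sup>2 + 1/2 \<ge> t"
  proof -
    have "(t - 1/2)\<^sup>2 = t\<^sup>2 - t + 1/4" by (simp add: power2_eq_square algebra_simps)
    moreover have "0 \<le> (t - 1/2)\<^sup>2" by simp
    ultimately show ?thesis using assms(7) by linarith
  qed
  ultimately have "8*t + 16*e + 4 \<le> 8 * X" by linarith
  moreover have "4 * (2*t + 4*e + 1) = 8*t + 16*e + 4" by simp
  moreover have "8 * X = 8 * (2*e+1) * Mx" using X by (simp only: mult.assoc)
  ultimately have "4 * (2*t + 4*e + 1) \<le> 8 * (2*e+1) * Mx" by linarith
  thus ?thesis unfolding L R using q0 by (intro mult_left_mono) auto
qed

theorem theorem3p2: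
  fixes f :: "'a::euclidean_space \<Rightarrow> 'x::euclidean_space \<Rightarrow> real"
    and gradf :: "'a \<Rightarrow> 'x \<Rightarrow> 'a"
    and X :: "'x set"
    and D E K1 K2 \<mu> \<eta> :: real
    and xs xs' :: "nat \<Rightarrow> 'x"
    and n b k :: nat
    and \<theta> :: 'a
  assumes grad: "\<And>t x. x \<in> X \<Longrightarrow> ((\<lambda>s. f s x) has_derivative (\<lambda>h. gradf t x \<bullet> h)) (at t)"
    and D: "\<forall>x\<in>X. norm x \<le> D"
    and E: "\<forall>x\<in>X. norm (gradf 0 x) \<le> E"
    and K1: "K1 > 0" and K2: "K2 > 0"
    and A1: "\<And>t t' x x'. x \<in> X \<Longrightarrow> x' \<in> X \<Longrightarrow>
              norm (gradf t x - gradf t' x') \<le> K1 * norm (t - t') + K2 * norm (x - x') * (norm t + norm t' + 1)"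
    and mu: "\<mu> > 0"
    and A2: "\<And>t1 t2 x. x \<in> X \<Longrightarrow> (gradf t1 x - gradf t2 x) \<bullet> (t1 - t2) \<ge> \<mu> * (norm (t1 - t2))\<^sup>2"
    and xs: "\<forall>i\<in>{1..n}. xs i \<in> X" and xs': "\<forall>i\<in>{1..n}. xs' i \<in> X"
    and differ: "\<exists>j. \<forall>i\<in>{1..n}. i \<noteq> j \<longrightarrow> xs i = xs' i"
    and b: "b \<in> {1..n}"
    and eta_pos: "\<eta> > 0"
    and eta: "\<eta> < min (1 / \<mu>) (\<mu> / (K1\<^sup>2 + 64 * D\<^sup>2 * K2\<^sup>2))"
  shows "W1 (sgd_law gradf xs \<eta> n b \<theta> k) (sgd_law gradf xs' \<eta> n b \<theta> k)
    \<le> ennreal (8 * D * K2 * (1 - (1 - \<eta> * \<mu> / 2) ^ k) / (real n * \<mu>) * (2 * E / \<mu> + 1) *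
         max (1 + 2 * (norm \<theta>)\<^sup>2 + 2 * E\<^sup>2 / \<mu>\<^sup>2)
             (2 - \<eta> / \<mu> * K1\<^sup>2 - 56 * \<eta> / \<mu> * D\<^sup>2 * K2\<^sup>2 + 64 * \<eta> / \<mu> ^ 3 * D\<^sup>2 * K2\<^sup>2 * E\<^sup>2))"
proof -
  obtain j where j: "\<forall>i\<in>{1..n}. i \<noteq> j \<longrightarrow> xs i = xs' i" using differ by blast
  have b0: "0 < b" "b \<le> n" using b by auto
  have x1: "xs 1 \<in> X" using xs b by auto
  have D0: "0 \<le> D" using D x1 norm_ge_zero[of "xs 1"] by (meson order_trans)
  have E0: "0 \<le> E" using E x1 norm_ge_zero[of "gradf 0 (xs 1)"] by (meson order_trans)
  have etamu: "\<eta> * \<mu> \<le> 1"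
  proof -
    have "\<eta> < 1 / \<mu>" using eta by simp
    thus ?thesis using mu by (simp add: field_simps)
  qed
  have etaK: "\<eta> * K1\<^sup>2 \<le> \<mu>"
  proof -
    have den: "K1\<^sup>2 + 64 * D\<^sup>2 * K2\<^sup>2 > 0" using K1 by (simp add: add_pos_nonneg)
    have "\<eta> < \<mu> / (K1\<^sup>2 + 64 * D\<^sup>2 * K2\<^sup>2)" using eta by simp
    hence "\<eta> * (K1\<^sup>2 + 64 * D\<^sup>2 * K2\<^sup>2) < \<mu>" using den by (simp add: field_simps)
    moreover have "0 \<le> \<eta> * (64 * D\<^sup>2 * K2\<^sup>2)" using eta_pos by simp
    ultimately show ?thesis by (simp add: algebra_simps)
  qed
  interpret sgdctx gradf X D E K1 K2 \<mu> \<eta>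
    by unfold_locales (use D E K2 A1 mu A2 eta_pos etaK etamu E0 in auto)
  define S where "S = bsubsets n b"
  define L where "L = {ws. length ws = k \<and> set ws \<subseteq> S}"
  define F where "F = (\<lambda>ws. foldl (sgd_step gradf xs \<eta> b) \<theta> ws)"
  define F' where "F' = (\<lambda>ws. foldl (sgd_step gradf xs' \<eta> b) \<theta> ws)"
  define N where "N = real (card S)"
  have finS: "finite S" unfolding S_def by (rule finite_bsubsets)
  have N0: "N > 0" unfolding N_def S_def card_bsubsets using b0 by simp
  have finL: "finite L" unfolding L_def
    using finite_lists_length_eq[OF finS, of k] by (simp add: conj_commute)
  have cardL: "card L = card S ^ k" unfolding L_def
    using card_lists_length_eq[OF finS, of k] by (simp add: conj_commute)
  have L0: "L \<noteq> {}" using cardL N0 N_def by auto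
  define B where "B = 2 * (2*D*K2*(2*(norm \<theta> + 2*E/\<mu>) + 1)) / (real n * \<mu>) * (1 - (1 - \<eta>*\<mu>/2)^k)"
  have avg: "(\<Sum>ws\<in>L. norm (F ws - F' ws)) \<le> N ^ k * B"
    using avg_bound[OF b0 xs xs' j D0, where k=k and \<theta>=\<theta>]
    unfolding L_def S_def F_def F'_def N_def B_def by simp
  have law: "sgd_law gradf xs \<eta> n b \<theta> k = measure_pmf (map_pmf F (pmf_of_set L))"
            "sgd_law gradf xs' \<eta> n b \<theta> k = measure_pmf (map_pmf F' (pmf_of_set L))"
    unfolding sgd_law_def L_def S_def F_def F'_def by simp_all
  have "W1 (sgd_law gradf xs \<eta> n b \<theta> k) (sgd_law gradf xs' \<eta> n b \<theta> k)
      \<le> \<integral>\<^sup>+ ws. ennreal (dist (F ws) (F' ws)) \<partial>measure_pmf (pmf_of_set L)"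
    unfolding law by (rule W1_coupling)
  also have "\<dots> = (\<Sum>ws\<in>L. ennreal (dist (F ws) (F' ws))) / of_nat (card L)"
    by (rule nn_integral_pmf_of_set[OF L0 finL])
  also have "\<dots> = ennreal ((\<Sum>ws\<in>L. norm (F ws - F' ws)) / real (card L))"
    using L0 finL
    by (simp add: dist_norm ennreal_of_nat_eq_real_of_nat divide_ennreal sum_nonneg card_gt_0_iff)
  also have "\<dots> \<le> ennreal B"
  proof (rule ennreal_leI)
    have "real (card L) = N ^ k" unfolding cardL N_def by simp
    thus "(\<Sum>ws\<in>L. norm (F ws - F' ws)) / real (card L) \<le> B"
      using avg N0 by (simp add: divide_le_eq mult.commute)
  qed
  also have "\<dots> \<le> ennreal (8 * D * K2 * (1 - (1 - \<eta> * \<mu> / 2) ^ k) / (real n * \<mu>) * (2 * E / \<mu> + 1) *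
         max (1 + 2 * (norm \<theta>)\<^sup>2 + 2 * E\<^sup>2 / \<mu>\<^sup>2)
             (2 - \<eta> / \<mu> * K1\<^sup>2 - 56 * \<eta> / \<mu> * D\<^sup>2 * K2\<^sup>2 + 64 * \<eta> / \<mu> ^ 3 * D\<^sup>2 * K2\<^sup>2 * E\<^sup>2))"
  proof (rule ennreal_leI)
    have r0: "0 \<le> 1 - (1 - \<eta>*\<mu>/2)^k"
    proof -
      have "(1 - \<eta>*\<mu>/2)^k \<le> 1" using etamu eta_pos mu
        by (intro power_le_one) (auto simp: mult_pos_pos less_imp_le)
      thus ?thesis by simp
    qed
    have mx: "max (1 + 2 * (norm \<theta>)\<^sup>2 + 2 * E\<^sup>2 / \<mu>\<^sup>2)
             (2 - \<eta> / \<mu> * K1\<^sup>2 - 56 * \<eta> / \<mu> * D\<^sup>2 * K2\<^sup>2 + 64 * \<eta> / \<mu> ^ 3 * D\<^sup>2 * K2\<^sup>2 * E\<^sup>2)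
          \<ge> 1 + 2 * (norm \<theta>)\<^sup>2"
      by (rule order_trans[OF _ max.cobounded1]) simp
    show "B \<le> 8 * D * K2 * (1 - (1 - \<eta> * \<mu> / 2) ^ k) / (real n * \<mu>) * (2 * E / \<mu> + 1) *
         max (1 + 2 * (norm \<theta>)\<^sup>2 + 2 * E\<^sup>2 / \<mu>\<^sup>2)
             (2 - \<eta> / \<mu> * K1\<^sup>2 - 56 * \<eta> / \<mu> * D\<^sup>2 * K2\<^sup>2 + 64 * \<eta> / \<mu> ^ 3 * D\<^sup>2 * K2\<^sup>2 * E\<^sup>2)"
      unfolding B_def by (rule final_arith[OF D0 K2 mu _ E0 r0 norm_ge_zero mx]) (use b0 in simp)
  qed
  finally show ?thesis .
qed

end
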